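(* Let $\mathcal{G}=(\mathcal{V},\mathcal{E})$ be a $4$-connected grid graph and consider a labeled multi-robot path planning instance on $\mathcal{G}$ with $n$ robots, distinct start vertices $s_1,\dots,s_n$ and distinct goal vertices $g_1,\dots,g_n$. Let $1\le w_1< w_2$ be suboptimality factors. Then the algorithm DCBS (described in the context) with parameters $w_1,w_2$ is complete and $w_2$ bounded-suboptimal: whenever the instance admits a collision-free solution, DCBS terminates and returns a collision-free solution whose sum-of-costs is at most $w_2$ times the minimum sum-of-costs over all collision-free solutions.
   Context: A path for robot $r_i$ is a sequence $P_i=(p_i^0,\dots,p_i^T)$ of vertices with $p_i^0=s_i$, $p_i^T=g_i$, and for each $1\le t\le T$ either $p_i^{t}=p_i^{t-1}$ or $p_i^{t}$ is a grid neighbor of $p_i^{t-1}$ (neighbors of $(i,j)$ are $(i\pm1,j),(i,j\pm1)$ when they lie in $\mathcal{V}$). A set of paths is collision-free if for all $t$ and $i\neq j$: $p_i^t\neq p_j^t$ (no vertex collision) and $(p_i^{t-1},p_i^t)\neq(p_j^t,p_j^{t-1})$ (no edge collision). The sum-of-costs is $\sum_i t_i$ where $t_i$ is the least time after which robot $i$ stays at $g_i$. ECBS($w_1$) (enhanced conflict-based search) is a two-level search. High-level nodes consist of a set of constraints (a constraint forbids a given robot from occupying a given vertex or traversing a given edge at a given time), a path for each robot consistent with its constraints, the sum-of-costs of these paths, and a lower bound $LB$ on the optimal sum-of-costs under the node's constraints. The high level maintains an OPEN list and a FOCAL list consisting of the OPEN nodes whose cost is at most $w_1$ times the minimum lower bound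 among OPEN nodes; it repeatedly removes from FOCAL the node with fewest pairwise collisions. If that node's paths are collision-free they are returned; otherwise a first collision between two robots is chosen and, for each of the two robots, a child node is created by adding a constraint forbidding that robot's part of the collision and replanning that robot's path with a low-level focal search (also with factor $w_1$); successful children are inserted into OPEN. ECBS($w_1$) is complete and returns solutions with sum-of-costs at most $w_1$ times optimal. DCBS($w_1,w_2$) is ECBS($w_1$) with the following addition: after a high-level node $N$ is popped from FOCAL and removed from OPEN, if a triggering predicate on $N$ holds (e.g., the number of collisions of $N$ is below a threshold, or has stagnated), a subroutine DbResolution takes the paths of $N$ and attempts to remove all collisions by local rerouting of conflicting robots inside $2\times3$ or $3\times3$ subgrids using a precomputed database of minimum-makespan solutions for such subproblems; if DbResolution succeeds and the resulting collision-free solution passes an optimality check with factor $w_2$ (its cost is at most $w_2$ times the lower bound), it is returned; otherwise the ordinary ECBS high-level expansion of $N$ proceeds. *)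

theory Defs
  imports Complex_Main "HOL-Library.Multiset"
begin

type_synonym vertex = "int \<times> int"
type_synonym path = "vertex list"

definition grid_adj :: "vertex \<Rightarrow> vertex \<Rightarrow> bool" where
  "grid_adj u v \<longleftrightarrow> \<bar>fst u - fst v\<bar> + \<bar>snd u - snd v\<bar> = 1"

text \<open>Position of a robot at time t; after the end of its list it stays at the last
  vertex (equivalent to padding all paths to a common horizon T).\<close>
definition pos :: "path \<Rightarrow> nat \<Rightarrow> vertex" where
  "pos p t = p ! min t (length p - 1)"

definition valid_path :: "vertex set \<Rightarrow> vertex \<Rightarrow> vertex \<Rightarrow> path \<Rightarrow> bool" where
  "valid_path V s g p \<longleftrightarrow> p \<noteq> [] \<and> set p \<subseteq> V \<and> hd p = s \<and> last p = g \<and>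
     (\<forall>k. Suc k < length p \<longrightarrow> p ! Suc k = p ! k \<or> grid_adj (p ! k) (p ! Suc k))"

definition path_cost :: "vertex \<Rightarrow> path \<Rightarrow> nat" where
  "path_cost g p = (LEAST t. \<forall>t'\<ge>t. pos p t' = g)"

definition vertex_collision :: "(nat \<Rightarrow> path) \<Rightarrow> nat \<Rightarrow> nat \<Rightarrow> nat \<Rightarrow> bool" where
  "vertex_collision P i j t \<longleftrightarrow> pos (P i) t = pos (P j) t"

definition edge_collision :: "(nat \<Rightarrow> path) \<Rightarrow> nat \<Rightarrow> nat \<Rightarrow> nat \<Rightarrow> bool" where
  "edge_collision P i j t \<longleftrightarrow> 1 \<le> t \<and>
     pos (P i) (t - 1) = pos (P j) t \<and> pos (P i) t = pos (P j) (t - 1)"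

definition collision_free :: "nat \<Rightarrow> (nat \<Rightarrow> path) \<Rightarrow> bool" where
  "collision_free n P \<longleftrightarrow> (\<forall>i<n. \<forall>j<n. i \<noteq> j \<longrightarrow>
     (\<forall>t. \<not> vertex_collision P i j t \<and> \<not> edge_collision P i j t))"

definition is_solution :: "vertex set \<Rightarrow> nat \<Rightarrow> (nat \<Rightarrow> vertex) \<Rightarrow> (nat \<Rightarrow> vertex) \<Rightarrow> (nat \<Rightarrow> path) \<Rightarrow> bool" where
  "is_solution V n s g P \<longleftrightarrow> (\<forall>i<n. valid_path V (s i) (g i) (P i)) \<and> collision_free n P"

definition soc :: "nat \<Rightarrow> (nat \<Rightarrow> vertex) \<Rightarrow> (nat \<Rightarrow> path) \<Rightarrow> nat" where
  "soc n g P = (\<Sum>i<n. path_cost (g i) (P i))"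

definition opt_soc :: "vertex set \<Rightarrow> nat \<Rightarrow> (nat \<Rightarrow> vertex) \<Rightarrow> (nat \<Rightarrow> vertex) \<Rightarrow> nat" where
  "opt_soc V n s g = (LEAST c. \<exists>P. is_solution V n s g P \<and> soc n g P = c)"

text \<open>VCon r v t: robot r may not be at v at time t.
  ECon r u v t: robot r may not traverse u to v between times t-1 and t.\<close>
datatype constr = VCon nat vertex nat | ECon nat vertex vertex nat

fun satisfies :: "nat \<Rightarrow> path \<Rightarrow> constr \<Rightarrow> bool" where
  "satisfies i p (VCon r v t) \<longleftrightarrow> (r = i \<longrightarrow> pos p t \<noteq> v)"
| "satisfies i p (ECon r u v t) \<longleftrightarrow> (r = i \<longrightarrow> \<not> (pos p (t - 1) = u \<and> pos p t = v))"

definition consistent :: "nat \<Rightarrow> path \<Rightarrow> constr set \<Rightarrow> bool" where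
  "consistent i p C \<longleftrightarrow> (\<forall>c\<in>C. satisfies i p c)"

text \<open>Specification of the low-level focal search with factor w1 for robot i under
  constraints C: it returns a path p and its lower bound lb (f_min) with
  lb \<le> cost of every consistent path and cost p \<le> w1 * lb; it fails only if no
  consistent path exists.\<close>
definition ll_ok :: "vertex set \<Rightarrow> (nat \<Rightarrow> vertex) \<Rightarrow> (nat \<Rightarrow> vertex) \<Rightarrow> real \<Rightarrow> nat \<Rightarrow>
    constr set \<Rightarrow> path \<Rightarrow> real \<Rightarrow> bool" where
  "ll_ok V s g w1 i C p lb \<longleftrightarrow> valid_path V (s i) (g i) p \<and> consistent i p C \<and>
     (\<forall>q. valid_path V (s i) (g i) q \<and> consistent i q C \<longrightarrow> lb \<le> real (path_cost (g i) q)) \<and>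
     real (path_cost (g i) p) \<le> w1 * lb"

definition ll_no_path :: "vertex set \<Rightarrow> (nat \<Rightarrow> vertex) \<Rightarrow> (nat \<Rightarrow> vertex) \<Rightarrow> nat \<Rightarrow> constr set \<Rightarrow> bool" where
  "ll_no_path V s g i C \<longleftrightarrow> \<not> (\<exists>q. valid_path V (s i) (g i) q \<and> consistent i q C)"

datatype collision = VColl nat nat vertex nat | EColl nat nat vertex vertex nat

fun is_collision :: "nat \<Rightarrow> (nat \<Rightarrow> path) \<Rightarrow> collision \<Rightarrow> bool" where
  "is_collision n P (VColl i j v t) \<longleftrightarrow> i < n \<and> j < n \<and> i \<noteq> j \<and>
     pos (P i) t = v \<and> pos (P j) t = v"
| "is_collision n P (EColl i j u v t) \<longleftrightarrow> i < n \<and> j < n \<and> i \<noteq> j \<and> 1 \<le> t \<and>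
     pos (P i) (t - 1) = u \<and> pos (P i) t = v \<and> pos (P j) (t - 1) = v \<and> pos (P j) t = u"

fun coll_time :: "collision \<Rightarrow> nat" where
  "coll_time (VColl i j v t) = t"
| "coll_time (EColl i j u v t) = t"

definition first_collision :: "nat \<Rightarrow> (nat \<Rightarrow> path) \<Rightarrow> collision \<Rightarrow> bool" where
  "first_collision n P c \<longleftrightarrow> is_collision n P c \<and>
     (\<forall>c'. is_collision n P c' \<longrightarrow> coll_time c \<le> coll_time c')"

fun split_collision :: "collision \<Rightarrow> (nat \<times> constr) \<times> (nat \<times> constr)" where
  "split_collision (VColl i j v t) = ((i, VCon i v t), (j, VCon j v t))"
| "split_collision (EColl i j u v t) = ((i, ECon i u v t), (j, ECon j v u t))"

definition num_collisions :: "nat \<Rightarrow> (nat \<Rightarrow> path) \<Rightarrow> nat" where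
  "num_collisions n P = card {(i, j). i < j \<and> j < n \<and>
     (\<exists>t. vertex_collision P i j t \<or> edge_collision P i j t)}"

datatype node = Node (constrs: "constr set") (npaths: "nat \<Rightarrow> path") (nlbs: "nat \<Rightarrow> real")

definition node_cost :: "nat \<Rightarrow> (nat \<Rightarrow> vertex) \<Rightarrow> node \<Rightarrow> nat" where
  "node_cost n g N = soc n g (npaths N)"

definition node_lb :: "nat \<Rightarrow> node \<Rightarrow> real" where
  "node_lb n N = (\<Sum>i<n. nlbs N i)"

definition min_lb :: "nat \<Rightarrow> node multiset \<Rightarrow> real" where
  "min_lb n Op = Min (node_lb n ` set_mset Op)"

text \<open>N is a node of FOCAL with fewest collisions.\<close>
definition selected :: "nat \<Rightarrow> (nat \<Rightarrow> vertex) \<Rightarrow> real \<Rightarrow> node multiset \<Rightarrow> node \<Rightarrow> bool" where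
  "selected n g w1 Op N \<longleftrightarrow> N \<in># Op \<and> real (node_cost n g N) \<le> w1 * min_lb n Op \<and>
     (\<forall>N'\<in>#Op. real (node_cost n g N') \<le> w1 * min_lb n Op \<longrightarrow>
        num_collisions n (npaths N) \<le> num_collisions n (npaths N'))"

definition child_result :: "vertex set \<Rightarrow> (nat \<Rightarrow> vertex) \<Rightarrow> (nat \<Rightarrow> vertex) \<Rightarrow> real \<Rightarrow>
    node \<Rightarrow> nat \<times> constr \<Rightarrow> node option \<Rightarrow> bool" where
  "child_result V s g w1 N rc res \<longleftrightarrow>
     (let r = fst rc; C' = insert (snd rc) (constrs N) in
       (res = None \<and> ll_no_path V s g r C') \<or>
       (\<exists>p lb. ll_ok V s g w1 r C' p lb \<and>
          res = Some (Node C' ((npaths N)(r := p)) ((nlbs N)(r := lb)))))"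

definition mset_opt :: "'a option \<Rightarrow> 'a multiset" where
  "mset_opt x = (case x of None \<Rightarrow> {#} | Some a \<Rightarrow> {#a#})"

datatype config = Running "node multiset" | Returned "nat \<Rightarrow> path" | Failed

definition dcbs_init :: "vertex set \<Rightarrow> nat \<Rightarrow> (nat \<Rightarrow> vertex) \<Rightarrow> (nat \<Rightarrow> vertex) \<Rightarrow> real \<Rightarrow>
    config \<Rightarrow> bool" where
  "dcbs_init V n s g w1 c \<longleftrightarrow>
     (\<exists>P L. (\<forall>i<n. ll_ok V s g w1 i {} (P i) (L i)) \<and> c = Running {#Node {} P L#}) \<or>
     ((\<exists>i<n. ll_no_path V s g i {}) \<and> c = Failed)"

text \<open>The triggering predicate is arbitrary, so the
  DbResolution branch (db_return) may or may not be taken; db is DbResolution applied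
  to the paths of the popped node; its output is returned if collision-free and its
  cost is at most w2 times the lower bound (minimum LB over OPEN).\<close>
inductive dcbs_step :: "vertex set \<Rightarrow> nat \<Rightarrow> (nat \<Rightarrow> vertex) \<Rightarrow> (nat \<Rightarrow> vertex) \<Rightarrow> real \<Rightarrow> real \<Rightarrow>
    ((nat \<Rightarrow> path) \<Rightarrow> (nat \<Rightarrow> path) option) \<Rightarrow> config \<Rightarrow> config \<Rightarrow> bool"
  for V n s g w1 w2 db where
  db_return: "selected n g w1 Op N \<Longrightarrow> db (npaths N) = Some Q \<Longrightarrow> collision_free n Q \<Longrightarrow>
     real (soc n g Q) \<le> w2 * min_lb n Op \<Longrightarrow>
     dcbs_step V n s g w1 w2 db (Running Op) (Returned Q)"
| ecbs_return: "selected n g w1 Op N \<Longrightarrow> collision_free n (npaths N) \<Longrightarrow>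
     dcbs_step V n s g w1 w2 db (Running Op) (Returned (npaths N))"
| expand: "selected n g w1 Op N \<Longrightarrow> \<not> collision_free n (npaths N) \<Longrightarrow>
     first_collision n (npaths N) c \<Longrightarrow>
     child_result V s g w1 N (fst (split_collision c)) r1 \<Longrightarrow>
     child_result V s g w1 N (snd (split_collision c)) r2 \<Longrightarrow>
     dcbs_step V n s g w1 w2 db (Running Op) (Running (Op - {#N#} + mset_opt r1 + mset_opt r2))"
| fail: "dcbs_step V n s g w1 w2 db (Running {#}) Failed"

end

theory Submission
  imports Defs
begin


lemma pos_in_set: "p \<noteq> [] \<Longrightarrow> pos p t \<in> set p"
  unfolding pos_def by (intro nth_mem) (cases p; auto)

lemma cost_prop:
  assumes "valid_path V s g p" "path_cost g p \<le> t"
  shows "pos p t = g"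
proof -
  have ex: "\<forall>t'\<ge>length p - 1. pos p t' = g"
    using assms(1) by (auto simp: valid_path_def pos_def last_conv_nth min_def)
  hence "\<forall>t'\<ge>path_cost g p. pos p t' = g" unfolding path_cost_def by (rule LeastI)
  thus ?thesis using assms(2) by blast
qed

lemma ll_exists:
  assumes "1 \<le> w1" "\<exists>q. valid_path V (s i) (g i) q \<and> consistent i q C"
  shows "\<exists>p lb. ll_ok V s g w1 i C p lb"
proof -
  let ?Q = "\<lambda>c. \<exists>q. valid_path V (s i) (g i) q \<and> consistent i q C \<and> path_cost (g i) q = c"
  obtain q0 where "valid_path V (s i) (g i) q0 \<and> consistent i q0 C" using assms by blast
  hence "?Q (path_cost (g i) q0)" by blast
  hence "?Q (Least ?Q)" by (rule LeastI)
  then obtain p where p: "valid_path V (s i) (g i) p" "consistent i p C" "path_cost (g i) p = Least ?Q"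
    by blast
  have lb: "\<forall>q. valid_path V (s i) (g i) q \<and> consistent i q C \<longrightarrow> real (Least ?Q) \<le> real (path_cost (g i) q)"
    by (auto intro!: Least_le)
  have "real (Least ?Q) * 1 \<le> real (Least ?Q) * w1" using assms(1) by (intro mult_left_mono) auto
  hence "real (path_cost (g i) p) \<le> w1 * real (Least ?Q)" using p(3) by (simp add: mult.commute)
  thus ?thesis unfolding ll_ok_def using p lb by blast
qed

lemma ll_weaken: "ll_ok V s g w1 i C p lb \<Longrightarrow> (\<forall>p. satisfies i p k) \<Longrightarrow> ll_ok V s g w1 i (insert k C) p lb"
  by (auto simp: ll_ok_def consistent_def)

definition dinv where
  "dinv V n s g w1 Pst Op \<longleftrightarrow> (\<forall>N\<in>#Op. \<forall>i<n. ll_ok V s g w1 i (constrs N) (npaths N i) (nlbs N i)) \<and>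
     (\<exists>N\<in>#Op. \<forall>i<n. consistent i (Pst i) (constrs N))"

lemma lb_le:
  assumes "dinv V n s g w1 Pst Op" "is_solution V n s g Pst"
  shows "min_lb n Op \<le> real (soc n g Pst)"
proof -
  obtain N where N: "N \<in># Op" "\<forall>i<n. consistent i (Pst i) (constrs N)" using assms(1) dinv_def by blast
  have "min_lb n Op \<le> node_lb n N" unfolding min_lb_def using N(1) by (intro Min_le) auto
  also have "node_lb n N \<le> (\<Sum>i<n. real (path_cost (g i) (Pst i)))" unfolding node_lb_def
  proof (rule sum_mono)
    fix i assume i: "i \<in> {..<n}"
    have "ll_ok V s g w1 i (constrs N) (npaths N i) (nlbs N i)" using assms(1) N(1) i dinv_def by auto
    moreover have "valid_path V (s i) (g i) (Pst i)" using assms(2) i by (auto simp: is_solution_def)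
    ultimately show "nlbs N i \<le> real (path_cost (g i) (Pst i))" using N(2) i by (auto simp: ll_ok_def)
  qed
  also have "\<dots> = real (soc n g Pst)" by (simp add: soc_def)
  finally show ?thesis .
qed

lemma cost_le_w1lb:
  assumes "\<forall>i<n. ll_ok V s g w1 i (constrs N) (npaths N i) (nlbs N i)"
  shows "real (node_cost n g N) \<le> w1 * node_lb n N"
proof -
  have "real (node_cost n g N) = (\<Sum>i<n. real (path_cost (g i) (npaths N i)))"
    by (simp add: node_cost_def soc_def)
  also have "\<dots> \<le> (\<Sum>i<n. w1 * nlbs N i)" using assms by (intro sum_mono) (auto simp: ll_ok_def)
  also have "\<dots> = w1 * node_lb n N" by (simp add: node_lb_def sum_distrib_left)
  finally show ?thesis .
qed

lemma focal_exists:
  assumes "dinv V n s g w1 Pst Op"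
  shows "\<exists>N. selected n g w1 Op N"
proof -
  have ne: "Op \<noteq> {#}" using assms by (auto simp: dinv_def)
  have "min_lb n Op \<in> node_lb n ` set_mset Op" unfolding min_lb_def using ne by (intro Min_in) auto
  then obtain N0 where N0: "N0 \<in># Op" "node_lb n N0 = min_lb n Op" by auto
  have "real (node_cost n g N0) \<le> w1 * min_lb n Op"
    using cost_le_w1lb[of n V s g w1 N0] N0 assms by (auto simp: dinv_def)
  hence "N0 \<in># Op \<and> real (node_cost n g N0) \<le> w1 * min_lb n Op" using N0 by auto
  from ex_has_least_nat[of "\<lambda>N. N \<in># Op \<and> real (node_cost n g N) \<le> w1 * min_lb n Op", OF this,
      of "\<lambda>N. num_collisions n (npaths N)"]
  show ?thesis by (auto simp: selected_def)
qed

lemma first_coll_exists: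
  assumes "\<not> collision_free n P"
  shows "\<exists>c. first_collision n P c"
proof -
  have "\<exists>c. is_collision n P c"
  proof -
    obtain i j t where ij: "i < n" "j < n" "i \<noteq> j" "vertex_collision P i j t \<or> edge_collision P i j t"
      using assms by (auto simp: collision_free_def)
    show ?thesis
    proof (cases "vertex_collision P i j t")
      case True
      hence "is_collision n P (VColl i j (pos (P i) t) t)" using ij by (simp add: vertex_collision_def)
      thus ?thesis by blast
    next
      case False
      hence "is_collision n P (EColl i j (pos (P i) (t-1)) (pos (P i) t) t)" using ij
        by (auto simp: edge_collision_def)
      thus ?thesis by blast
    qed
  qed
  then obtain c0 where "is_collision n P c0" by blast
  from ex_has_least_nat[of "is_collision n P", OF this, of coll_time]
  show ?thesis by (auto simp: first_collision_def)
qed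

lemma child_exists:
  assumes "1 \<le> w1"
  shows "\<exists>r. child_result V s g w1 N rc r"
proof (cases "\<exists>q. valid_path V (s (fst rc)) (g (fst rc)) q \<and> consistent (fst rc) q (insert (snd rc) (constrs N))")
  case True
  then obtain p lb where "ll_ok V s g w1 (fst rc) (insert (snd rc) (constrs N)) p lb"
    using ll_exists[OF assms] by blast
  thus ?thesis unfolding child_result_def Let_def by blast
next
  case False
  thus ?thesis unfolding child_result_def Let_def ll_no_path_def by blast
qed

lemma progress:
  assumes "dinv V n s g w1 Pst Op" "1 \<le> w1"
  shows "\<exists>c'. dcbs_step V n s g w1 w2 db (Running Op) c'"
proof -
  obtain N where N: "selected n g w1 Op N" using focal_exists[OF assms(1)] by blast
  show ?thesis
  proof (cases "collision_free n (npaths N)")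
    case True
    thus ?thesis using N ecbs_return by blast
  next
    case False
    obtain c where c: "first_collision n (npaths N) c" using first_coll_exists[OF False] by blast
    obtain r1 where r1: "child_result V s g w1 N (fst (split_collision c)) r1" using child_exists[OF assms(2)] by blast
    obtain r2 where r2: "child_result V s g w1 N (snd (split_collision c)) r2" using child_exists[OF assms(2)] by blast
    show ?thesis using expand[OF N False c r1 r2] by blast
  qed
qed



fun cok :: "nat \<Rightarrow> vertex set \<Rightarrow> nat \<Rightarrow> constr \<Rightarrow> bool" where
  "cok n V T (VCon r v t) \<longleftrightarrow> r < n \<and> v \<in> V \<and> t \<le> T"
| "cok n V T (ECon r u v t) \<longleftrightarrow> r < n \<and> u \<in> V \<and> v \<in> V \<and> t \<le> T"

lemma cok_finite:
  assumes "finite V" shows "finite {k. cok n V T k}"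
proof -
  have "{k. cok n V T k} \<subseteq> (\<lambda>(r,v,t). VCon r v t) ` ({..<n} \<times> V \<times> {..T}) \<union>
      (\<lambda>(r,u,v,t). ECon r u v t) ` ({..<n} \<times> V \<times> V \<times> {..T})"
  proof
    fix k assume "k \<in> {k. cok n V T k}"
    thus "k \<in> (\<lambda>(r,v,t). VCon r v t) ` ({..<n} \<times> V \<times> {..T}) \<union>
      (\<lambda>(r,u,v,t). ECon r u v t) ` ({..<n} \<times> V \<times> V \<times> {..T})"
    proof (cases k)
      case (VCon r v t)
      thus ?thesis using \<open>k \<in> {k. cok n V T k}\<close> by (auto intro!: rev_image_eqI[of "(r,v,t)"])
    next
      case (ECon r u v t)
      thus ?thesis using \<open>k \<in> {k. cok n V T k}\<close> by (auto intro!: rev_image_eqI[of "(r,u,v,t)"])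
    qed
  qed
  moreover have "finite ((\<lambda>(r,v,t). VCon r v t) ` ({..<n} \<times> V \<times> {..T}) \<union>
      (\<lambda>(r,u,v,t). ECon r u v t) ` ({..<n} \<times> V \<times> V \<times> {..T}))"
    using assms by auto
  ultimately show ?thesis by (rule finite_subset)
qed

lemma pos_in_V: "p \<noteq> [] \<Longrightarrow> set p \<subseteq> V \<Longrightarrow> pos p t \<in> V"
  using pos_in_set by blast

lemma split_facts:
  assumes "is_collision n P c" "rc = fst (split_collision c) \<or> rc = snd (split_collision c)"
    and "\<forall>i<n. P i \<noteq> [] \<and> set (P i) \<subseteq> V" and "coll_time c \<le> T"
  shows "fst rc < n \<and> \<not> satisfies (fst rc) (P (fst rc)) (snd rc) \<and>
    (\<forall>i p. i \<noteq> fst rc \<longrightarrow> satisfies i p (snd rc)) \<and> cok n V T (snd rc)"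
  using assms by (cases c) (auto intro!: pos_in_V)

lemma Pst_child:
  assumes "is_collision n P c" "collision_free n Q"
  shows "satisfies (fst (fst (split_collision c))) (Q (fst (fst (split_collision c)))) (snd (fst (split_collision c)))
    \<or> satisfies (fst (snd (split_collision c))) (Q (fst (snd (split_collision c)))) (snd (snd (split_collision c)))"
proof (cases c)
  case (VColl i j v t)
  thus ?thesis using assms unfolding collision_free_def vertex_collision_def by (auto; metis)
next
  case (EColl i j u v t)
  thus ?thesis using assms unfolding collision_free_def edge_collision_def by (auto; metis)
qed

lemma coll_time_le:
  assumes "is_collision n P c" "inj_on g {..<n}"
    and "\<forall>i<n. valid_path V (s i) (g i) (P i) \<and> path_cost (g i) (P i) \<le> B"
  shows "coll_time c \<le> B"
proof (rule ccontr)
  assume nb: "\<not> coll_time c \<le> B"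
  show False
  proof (cases c)
    case (VColl i j v t)
    hence "pos (P i) t = g i" "pos (P j) t = g j"
      using assms nb cost_prop[of V "s i" "g i" "P i" t] cost_prop[of V "s j" "g j" "P j" t] by auto
    thus False using assms(1,2) VColl by (auto simp: inj_on_def)
  next
    case (EColl i j u v t)
    hence "pos (P i) (t-1) = g i" "pos (P j) t = g j"
      using assms nb cost_prop[of V "s i" "g i" "P i" "t-1"] cost_prop[of V "s j" "g j" "P j" t] by auto
    thus False using assms(1,2) EColl by (auto simp: inj_on_def)
  qed
qed

definition meas :: "constr set \<Rightarrow> node multiset \<Rightarrow> nat" where
  "meas K Op = sum_mset (image_mset (\<lambda>N. 3 ^ card (K - constrs N)) Op)"

lemma meas_one:
  assumes "finite K" "\<forall>M. r = Some M \<longrightarrow> (\<exists>k\<in>K. k \<notin> constrs N \<and> constrs M = insert k (constrs N))"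
  shows "3 * meas K (mset_opt r) \<le> 3 ^ card (K - constrs N)"
proof (cases r)
  case None thus ?thesis by (simp add: meas_def mset_opt_def)
next
  case (Some M)
  then obtain k where k: "k \<in> K" "k \<notin> constrs N" "constrs M = insert k (constrs N)" using assms by blast
  have "K - constrs M = (K - constrs N) - {k}" using k by auto
  moreover have "k \<in> K - constrs N" using k by auto
  ultimately have "card (K - constrs M) = card (K - constrs N) - 1" "card (K - constrs N) \<ge> 1"
    using assms(1) by (auto simp: card_gt_0_iff Suc_le_eq)
  hence "3 * 3 ^ card (K - constrs M) = (3::nat) ^ card (K - constrs N)"
    by (metis Suc_diff_le diff_Suc_1 power_Suc)
  thus ?thesis using Some by (simp add: meas_def mset_opt_def)
qed

lemma meas_dec:
  assumes "N \<in># Op" "finite K"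
    "\<forall>M. r1 = Some M \<longrightarrow> (\<exists>k\<in>K. k \<notin> constrs N \<and> constrs M = insert k (constrs N))"
    "\<forall>M. r2 = Some M \<longrightarrow> (\<exists>k\<in>K. k \<notin> constrs N \<and> constrs M = insert k (constrs N))"
  shows "meas K (Op - {#N#} + mset_opt r1 + mset_opt r2) < meas K Op"
proof -
  have a: "meas K (A + B) = meas K A + meas K B" for A B by (simp add: meas_def)
  have "meas K (add_mset N (Op - {#N#})) = meas K (Op - {#N#}) + 3 ^ card (K - constrs N)"
    by (simp add: meas_def)
  hence b: "meas K Op = meas K (Op - {#N#}) + 3 ^ card (K - constrs N)"
    using insert_DiffM[OF assms(1)] by simp
  have "(0::nat) < 3 ^ card (K - constrs N)" by simp
  moreover have "meas K (Op - {#N#} + mset_opt r1 + mset_opt r2) =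
      meas K (Op - {#N#}) + meas K (mset_opt r1) + meas K (mset_opt r2)" by (simp add: a)
  ultimately show ?thesis using meas_one[OF assms(2,3)] meas_one[OF assms(2,4)] b by linarith
qed



lemma nat_le_ceil: "real x \<le> y \<Longrightarrow> x \<le> nat \<lceil>y\<rceil>"
  by linarith

lemma mem_mset_opt: "M \<in># mset_opt r \<longleftrightarrow> r = Some M"
  by (cases r) (auto simp: mset_opt_def)

lemma step_from_running: "dcbs_step V n s g w1 w2 db c c' \<Longrightarrow> \<exists>Op. c = Running Op"
  by (cases rule: dcbs_step.cases) auto

locale dsetup =
  fixes V :: "vertex set" and n :: nat and s g :: "nat \<Rightarrow> vertex" and w1 w2 :: real
    and db :: "(nat \<Rightarrow> path) \<Rightarrow> (nat \<Rightarrow> path) option" and Pst :: "nat \<Rightarrow> path"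
  assumes fin: "finite V" and ginj: "inj_on g {..<n}" and w1ge: "1 \<le> w1" and w12: "w1 < w2"
    and dbok: "\<forall>P Q. db P = Some Q \<longrightarrow> (\<forall>i<n. valid_path V (s i) (g i) (Q i))"
    and solP: "is_solution V n s g Pst" and optP: "soc n g Pst = opt_soc V n s g"
begin

definition "TT = nat \<lceil>w1 * real (opt_soc V n s g)\<rceil>"
definition "KK = {k. cok n V TT k}"

lemma KK_finite: "finite KK"
  unfolding KK_def using cok_finite[OF fin] .

lemma child_good:
  assumes llN: "\<forall>i<n. ll_ok V s g w1 i (constrs N) (npaths N i) (nlbs N i)"
    and c: "first_collision n (npaths N) c"
    and rc: "rc = fst (split_collision c) \<or> rc = snd (split_collision c)"
    and cr: "child_result V s g w1 N rc r"
    and ct: "coll_time c \<le> TT"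
  shows "\<forall>M. r = Some M \<longrightarrow> (\<exists>k\<in>KK. k \<notin> constrs N \<and> constrs M = insert k (constrs N)) \<and>
            (\<forall>i<n. ll_ok V s g w1 i (constrs M) (npaths M i) (nlbs M i))"
    and "(\<forall>i<n. consistent i (Pst i) (constrs N)) \<Longrightarrow> satisfies (fst rc) (Pst (fst rc)) (snd rc) \<Longrightarrow>
         \<exists>M. r = Some M \<and> (\<forall>i<n. consistent i (Pst i) (constrs M))"
proof -
  have ne: "\<forall>i<n. npaths N i \<noteq> [] \<and> set (npaths N i) \<subseteq> V"
    using llN by (auto simp: ll_ok_def valid_path_def)
  have sf: "fst rc < n \<and> \<not> satisfies (fst rc) (npaths N (fst rc)) (snd rc) \<and>
    (\<forall>i p. i \<noteq> fst rc \<longrightarrow> satisfies i p (snd rc)) \<and> cok n V TT (snd rc)"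
    using split_facts[OF _ rc ne ct] c by (auto simp: first_collision_def)
  have notin: "snd rc \<notin> constrs N"
  proof
    assume "snd rc \<in> constrs N"
    moreover have "consistent (fst rc) (npaths N (fst rc)) (constrs N)" using llN sf by (auto simp: ll_ok_def)
    ultimately show False using sf by (auto simp: consistent_def)
  qed
  show "\<forall>M. r = Some M \<longrightarrow> (\<exists>k\<in>KK. k \<notin> constrs N \<and> constrs M = insert k (constrs N)) \<and>
            (\<forall>i<n. ll_ok V s g w1 i (constrs M) (npaths M i) (nlbs M i))"
  proof (intro allI impI)
    fix M assume rM: "r = Some M"
    then obtain p lb where p: "ll_ok V s g w1 (fst rc) (insert (snd rc) (constrs N)) p lb"
      "M = Node (insert (snd rc) (constrs N)) ((npaths N)(fst rc := p)) ((nlbs N)(fst rc := lb))"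
      using cr unfolding child_result_def Let_def by auto
    have "\<forall>i<n. ll_ok V s g w1 i (constrs M) (npaths M i) (nlbs M i)"
    proof (intro allI impI)
      fix i assume i: "i < n"
      show "ll_ok V s g w1 i (constrs M) (npaths M i) (nlbs M i)"
      proof (cases "i = fst rc")
        case True thus ?thesis using p by simp
      next
        case False thus ?thesis using p ll_weaken[of V s g w1 i "constrs N" "npaths N i" "nlbs N i" "snd rc"]
            llN i sf by simp
      qed
    qed
    moreover have "snd rc \<in> KK" using sf by (simp add: KK_def)
    ultimately show "(\<exists>k\<in>KK. k \<notin> constrs N \<and> constrs M = insert k (constrs N)) \<and>
            (\<forall>i<n. ll_ok V s g w1 i (constrs M) (npaths M i) (nlbs M i))" using notin p by auto
  qed
  assume cP: "\<forall>i<n. consistent i (Pst i) (constrs N)" and sP: "satisfies (fst rc) (Pst (fst rc)) (snd rc)"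
  have cP': "\<forall>i<n. consistent i (Pst i) (insert (snd rc) (constrs N))"
    using cP sP sf by (auto simp: consistent_def; metis)
  have "valid_path V (s (fst rc)) (g (fst rc)) (Pst (fst rc))" using solP sf by (auto simp: is_solution_def)
  hence "\<not> ll_no_path V s g (fst rc) (insert (snd rc) (constrs N))"
    using cP' sf by (auto simp: ll_no_path_def)
  then obtain p lb where p:
      "r = Some (Node (insert (snd rc) (constrs N)) ((npaths N)(fst rc := p)) ((nlbs N)(fst rc := lb)))"
    using cr unfolding child_result_def Let_def by auto
  thus "\<exists>M. r = Some M \<and> (\<forall>i<n. consistent i (Pst i) (constrs M))" using cP' by auto
qed

lemma step_lemma:
  assumes inv: "dinv V n s g w1 Pst Op" and st: "dcbs_step V n s g w1 w2 db (Running Op) c'"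
  shows "(\<exists>Q. c' = Returned Q \<and> is_solution V n s g Q \<and> real (soc n g Q) \<le> w2 * real (opt_soc V n s g))
      \<or> (\<exists>Op'. c' = Running Op' \<and> dinv V n s g w1 Pst Op' \<and> meas KK Op' < meas KK Op)"
proof -
  have hmin: "min_lb n Op \<le> real (opt_soc V n s g)" using lb_le[OF inv solP] optP by simp
  have w2pos: "0 \<le> w2" using w1ge w12 by linarith
  have w1pos: "0 \<le> w1" using w1ge by linarith
  have optge: "w1 * real (opt_soc V n s g) \<le> w2 * real (opt_soc V n s g)"
    using w12 by (intro mult_right_mono) auto
  from st show ?thesis
  proof (cases rule: dcbs_step.cases)
    case (db_return N Q)
    have "real (soc n g Q) \<le> w2 * real (opt_soc V n s g)"
      using db_return hmin mult_left_mono[OF hmin w2pos] by auto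
    moreover have "is_solution V n s g Q" using db_return dbok by (auto simp: is_solution_def)
    ultimately show ?thesis using db_return by auto
  next
    case (ecbs_return N)
    have NO: "N \<in># Op" using ecbs_return by (auto simp: selected_def)
    have "real (soc n g (npaths N)) \<le> w1 * min_lb n Op"
      using ecbs_return by (auto simp: selected_def node_cost_def)
    also have "\<dots> \<le> w1 * real (opt_soc V n s g)" using mult_left_mono[OF hmin w1pos] .
    also have "\<dots> \<le> w2 * real (opt_soc V n s g)" using optge .
    finally have "real (soc n g (npaths N)) \<le> w2 * real (opt_soc V n s g)" .
    moreover have "is_solution V n s g (npaths N)" using ecbs_return inv NO
      by (auto simp: is_solution_def dinv_def ll_ok_def)
    ultimately show ?thesis using ecbs_return by auto
  next
    case fail
    thus ?thesis using inv by (auto simp: dinv_def)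
  next
    case (expand N c r1 r2)
    have NO: "N \<in># Op" using expand by (auto simp: selected_def)
    have llN: "\<forall>i<n. ll_ok V s g w1 i (constrs N) (npaths N i) (nlbs N i)" using inv NO by (auto simp: dinv_def)
    have "real (soc n g (npaths N)) \<le> w1 * min_lb n Op"
      using expand by (auto simp: selected_def node_cost_def)
    also have "\<dots> \<le> w1 * real (opt_soc V n s g)" using mult_left_mono[OF hmin w1pos] .
    finally have sN: "real (soc n g (npaths N)) \<le> w1 * real (opt_soc V n s g)" .
    have pc: "\<forall>i<n. valid_path V (s i) (g i) (npaths N i) \<and> path_cost (g i) (npaths N i) \<le> TT"
    proof (intro allI impI conjI)
      fix i assume i: "i < n"
      show "valid_path V (s i) (g i) (npaths N i)" using llN i by (auto simp: ll_ok_def)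
      have "path_cost (g i) (npaths N i) \<le> soc n g (npaths N)" unfolding soc_def
        using i by (intro member_le_sum) auto
      hence "real (path_cost (g i) (npaths N i)) \<le> w1 * real (opt_soc V n s g)" using sN by linarith
      thus "path_cost (g i) (npaths N i) \<le> TT" unfolding TT_def by (rule nat_le_ceil)
    qed
    have ct: "coll_time c \<le> TT"
      using coll_time_le[OF _ ginj pc] expand by (auto simp: first_collision_def)
    note g1 = child_good[OF llN expand(4) _ expand(5) ct]
    note g2 = child_good[OF llN expand(4) _ expand(6) ct]
    have dec: "meas KK (Op - {#N#} + mset_opt r1 + mset_opt r2) < meas KK Op"
      using meas_dec[OF NO KK_finite] g1(1) g2(1) by blast
    have a: "\<forall>M\<in>#(Op - {#N#} + mset_opt r1 + mset_opt r2). \<forall>i<n. ll_ok V s g w1 i (constrs M) (npaths M i) (nlbs M i)"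
    proof
      fix M assume "M \<in># Op - {#N#} + mset_opt r1 + mset_opt r2"
      hence "M \<in># Op \<or> r1 = Some M \<or> r2 = Some M" by (auto simp: mem_mset_opt dest: in_diffD)
      thus "\<forall>i<n. ll_ok V s g w1 i (constrs M) (npaths M i) (nlbs M i)"
        using inv g1(1) g2(1) by (auto simp: dinv_def)
    qed
    obtain Ns where Ns: "Ns \<in># Op" "\<forall>i<n. consistent i (Pst i) (constrs Ns)" using inv by (auto simp: dinv_def)
    have b: "\<exists>M\<in>#(Op - {#N#} + mset_opt r1 + mset_opt r2). \<forall>i<n. consistent i (Pst i) (constrs M)"
    proof (cases "Ns = N")
      case False
      have "Ns \<in># add_mset N (Op - {#N#})" using Ns NO by simp
      hence "Ns \<in># Op - {#N#}" using False by simp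
      thus ?thesis using Ns by auto
    next
      case True
      have cf: "collision_free n Pst" using solP by (simp add: is_solution_def)
      have ic: "is_collision n (npaths N) c" using expand by (simp add: first_collision_def)
      from Pst_child[OF ic cf] show ?thesis
      proof
        assume "satisfies (fst (fst (split_collision c))) (Pst (fst (fst (split_collision c)))) (snd (fst (split_collision c)))"
        then obtain M where "r1 = Some M" "\<forall>i<n. consistent i (Pst i) (constrs M)"
          using g1(2) Ns True by blast
        thus ?thesis by (auto simp: mem_mset_opt)
      next
        assume "satisfies (fst (snd (split_collision c))) (Pst (fst (snd (split_collision c)))) (snd (snd (split_collision c)))"
        then obtain M where "r2 = Some M" "\<forall>i<n. consistent i (Pst i) (constrs M)"
          using g2(2) Ns True by blast
        thus ?thesis by (auto simp: mem_mset_opt)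
      qed
    qed
    show ?thesis using a b dec expand by (auto simp: dinv_def)
  qed
qed

end



theorem mainTheorem1:
  fixes V :: "vertex set" and n :: nat and s g :: "nat \<Rightarrow> vertex" and w1 w2 :: real
    and db :: "(nat \<Rightarrow> path) \<Rightarrow> (nat \<Rightarrow> path) option"
  assumes "finite V"
    and "\<forall>i<n. s i \<in> V" and "\<forall>i<n. g i \<in> V"
    and "inj_on s {..<n}" and "inj_on g {..<n}"
    and "1 \<le> w1" and "w1 < w2"
    and "\<forall>P Q. db P = Some Q \<longrightarrow> (\<forall>i<n. valid_path V (s i) (g i) (Q i))"
    and "\<exists>P. is_solution V n s g P"
  shows "(\<exists>c0. dcbs_init V n s g w1 c0)
    \<and> \<not> (\<exists>f. dcbs_init V n s g w1 (f 0) \<and> (\<forall>k. dcbs_step V n s g w1 w2 db (f k) (f (Suc k))))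
    \<and> (\<forall>c0 c. dcbs_init V n s g w1 c0 \<longrightarrow> (dcbs_step V n s g w1 w2 db)\<^sup>*\<^sup>* c0 c \<longrightarrow>
          (\<exists>c'. dcbs_step V n s g w1 w2 db c c') \<or>
          (\<exists>P. c = Returned P \<and> is_solution V n s g P \<and>
               real (soc n g P) \<le> w2 * real (opt_soc V n s g)))"
proof -
  obtain Pst where solP: "is_solution V n s g Pst" and optP: "soc n g Pst = opt_soc V n s g"
    using LeastI_ex[of "\<lambda>c. \<exists>P. is_solution V n s g P \<and> soc n g P = c"] assms(9)
    unfolding opt_soc_def by blast
  interpret D: dsetup V n s g w1 w2 db Pst
    using assms solP optP by unfold_locales auto
  have ex0: "\<forall>i<n. \<exists>p lb. ll_ok V s g w1 i {} p lb"
  proof (intro allI impI)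
    fix i assume i: "i < n"
    have "valid_path V (s i) (g i) (Pst i) \<and> consistent i (Pst i) {}"
      using solP i by (auto simp: is_solution_def consistent_def)
    thus "\<exists>p lb. ll_ok V s g w1 i {} p lb" using ll_exists[OF assms(6)] by blast
  qed
  hence "\<forall>i. \<exists>p. i < n \<longrightarrow> (\<exists>lb. ll_ok V s g w1 i {} p lb)" by blast
  then obtain P where P: "\<forall>i<n. \<exists>lb. ll_ok V s g w1 i {} (P i) lb" by (metis choice)
  hence "\<forall>i. \<exists>lb. i < n \<longrightarrow> ll_ok V s g w1 i {} (P i) lb" by blast
  then obtain L where PL: "\<forall>i<n. ll_ok V s g w1 i {} (P i) (L i)" by (metis choice)
  have part1: "\<exists>c0. dcbs_init V n s g w1 c0"
    using PL unfolding dcbs_init_def by blast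
  have init: "\<exists>Op. c0 = Running Op \<and> dinv V n s g w1 Pst Op" if ci: "dcbs_init V n s g w1 c0" for c0
  proof -
    have "\<not> (\<exists>i<n. ll_no_path V s g i {})"
      using solP by (auto simp: ll_no_path_def is_solution_def consistent_def)
    then obtain P L where PL: "\<forall>i<n. ll_ok V s g w1 i {} (P i) (L i)" "c0 = Running {#Node {} P L#}"
      using ci unfolding dcbs_init_def by blast
    thus ?thesis by (auto simp: dinv_def consistent_def)
  qed
  have part2: "\<not> (\<exists>f. dcbs_init V n s g w1 (f 0) \<and> (\<forall>k. dcbs_step V n s g w1 w2 db (f k) (f (Suc k))))"
  proof
    assume "\<exists>f. dcbs_init V n s g w1 (f 0) \<and> (\<forall>k. dcbs_step V n s g w1 w2 db (f k) (f (Suc k)))"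
    then obtain f where f0: "dcbs_init V n s g w1 (f 0)"
      and fs: "\<forall>k. dcbs_step V n s g w1 w2 db (f k) (f (Suc k))" by blast
    obtain Op0 where Op0: "f 0 = Running Op0" "dinv V n s g w1 Pst Op0" using init[OF f0] by blast
    have "\<exists>Op. f k = Running Op \<and> dinv V n s g w1 Pst Op \<and> meas D.KK Op + k \<le> meas D.KK Op0" for k
    proof (induction k)
      case 0 thus ?case using Op0 by auto
    next
      case (Suc k)
      then obtain Op where Op: "f k = Running Op" "dinv V n s g w1 Pst Op" "meas D.KK Op + k \<le> meas D.KK Op0"
        by blast
      have st: "dcbs_step V n s g w1 w2 db (Running Op) (f (Suc k))" using fs Op(1) by metis
      obtain Op2 where Op2: "f (Suc k) = Running Op2" using step_from_running fs by blast
      from D.step_lemma[OF Op(2) st] Op2 Op(3) show ?case by auto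
    qed
    from this[of "Suc (meas D.KK Op0)"] show False by auto
  qed
  have part3: "(\<exists>c'. dcbs_step V n s g w1 w2 db c c') \<or>
          (\<exists>P. c = Returned P \<and> is_solution V n s g P \<and> real (soc n g P) \<le> w2 * real (opt_soc V n s g))"
    if c0: "dcbs_init V n s g w1 c0" and r: "(dcbs_step V n s g w1 w2 db)\<^sup>*\<^sup>* c0 c" for c0 c
  proof -
    have "(\<exists>Op. c = Running Op \<and> dinv V n s g w1 Pst Op) \<or>
          (\<exists>P. c = Returned P \<and> is_solution V n s g P \<and> real (soc n g P) \<le> w2 * real (opt_soc V n s g))"
      using r
    proof (induction rule: rtranclp_induct)
      case base thus ?case using init[OF c0] by blast
    next
      case (step y z)
      obtain Op where Op: "y = Running Op" using step_from_running[OF step(2)] by blast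
      hence "dinv V n s g w1 Pst Op" using step(3) by auto
      from D.step_lemma[OF this step(2)[unfolded Op]] show ?case by auto
    qed
    thus ?thesis using progress[OF _ assms(6)] by blast
  qed
  show ?thesis using part1 part2 part3 by blast
qed

end
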